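(* Suppose that $S^{obs}$ is Minkowski-reduced in a broad sense and the Bravais class of $S$ is primitive rectangular. Then, under the assumption $\mathcal{A}_{2,1}$, $S$ is also Minkowski-reduced in a broad sense. In particular, $S$ is contained in the linear space $$ V_{rP} := \left\{\begin{pmatrix} s_{11} & 0 \\ 0 & s_{22} \end{pmatrix} : s_{11}, s_{22}\in \mathbb R \right\}. $$
   Context: $S$ denotes the true (unknown) $2$-by-$2$ positive-definite metric tensor (Gram matrix) of a 2D lattice basis, and $S^{obs}$ its observed value containing experimental errors. For symmetric $2$-by-$2$ matrices $S, T$, the inner product is $S \bullet T := \mathrm{Trace}(ST)$. A positive-definite symmetric $S$ is Minkowski-reduced in a broad sense if it is Venkov-reduced with respect to the identity $I_2$, i.e. $S \bullet I_2 \le (g S g^T) \bullet I_2$ for every $g \in GL_2(\mathbb Z)$. Assumption $\mathcal{A}_{2,1}$: if the $2$-by-$2$ metric tensor $S$ satisfies $S \bullet T \ge v^T S v$ for some nonzero $v \in \mathbb Z^2$ and some symmetric $2$-by-$2$ matrix $T$, then its observed value $S^{obs}$ also satisfies $S^{obs} \bullet T > 0$. Two lattices are in the same Bravais class if the automorphism groups $\{\sigma \in GL_2(\mathbb Z) : \sigma^T S \sigma = S\}$ of their metric tensors are conjugate in $GL_2(\mathbb Z)$; primitive rectangular is the Bravais class of a lattice with a reduced basis of two orthogonal vectors. *)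

theory Defs
  imports "HOL-Analysis.Analysis"
begin

type_synonym mat2 = "real^2^2"

definition mdot :: "mat2 \<Rightarrow> mat2 \<Rightarrow> real" where
  "mdot S T = trace (S ** T)"

definition sym_mat :: "mat2 \<Rightarrow> bool" where
  "sym_mat S \<longleftrightarrow> transpose S = S"

definition pos_def :: "mat2 \<Rightarrow> bool" where
  "pos_def S \<longleftrightarrow> sym_mat S \<and> (\<forall>x::real^2. x \<noteq> 0 \<longrightarrow> x \<bullet> (S *v x) > 0)"

definition int_vec :: "real^2 \<Rightarrow> bool" where
  "int_vec v \<longleftrightarrow> (\<forall>i. v $ i \<in> \<int>)"

definition int_mat :: "mat2 \<Rightarrow> bool" where
  "int_mat g \<longleftrightarrow> (\<forall>i j. g $ i $ j \<in> \<int>)"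

definition GL2Z :: "mat2 set" where
  "GL2Z = {g. int_mat g \<and> \<bar>det g\<bar> = 1}"

definition mdiag :: "real \<Rightarrow> real \<Rightarrow> mat2" where
  "mdiag a b = vector [vector [a, 0], vector [0, b]]"

text \<open>Minkowski-reduced in a broad sense: Venkov-reduced w.r.t. the identity.\<close>
definition minkowski_reduced_broad :: "mat2 \<Rightarrow> bool" where
  "minkowski_reduced_broad S \<longleftrightarrow> pos_def S \<and>
     (\<forall>g\<in>GL2Z. mdot S (mat 1) \<le> mdot (g ** S ** transpose g) (mat 1))"

definition aut :: "mat2 \<Rightarrow> mat2 set" where
  "aut S = {\<sigma> \<in> GL2Z. transpose \<sigma> ** S ** \<sigma> = S}"

definition conj_GL2Z :: "mat2 set \<Rightarrow> mat2 set \<Rightarrow> bool" where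
  "conj_GL2Z G H \<longleftrightarrow> (\<exists>g\<in>GL2Z. H = (\<lambda>\<sigma>. g ** \<sigma> ** matrix_inv g) ` G)"

definition same_bravais_class :: "mat2 \<Rightarrow> mat2 \<Rightarrow> bool" where
  "same_bravais_class S S' \<longleftrightarrow> conj_GL2Z (aut S) (aut S')"

text \<open>Primitive rectangular: same Bravais class as a lattice with a reduced basis of two
  orthogonal vectors of different lengths (Gram matrix diag(a,b), 0 < a < b; the
  square case a = b is the separate square Bravais class).\<close>
definition primitive_rectangular :: "mat2 \<Rightarrow> bool" where
  "primitive_rectangular S \<longleftrightarrow> (\<exists>a b. 0 < a \<and> a < b \<and> same_bravais_class S (mdiag a b))"

definition assumption_A21 :: "mat2 \<Rightarrow> mat2 \<Rightarrow> bool" where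
  "assumption_A21 S Sobs \<longleftrightarrow>
     (\<forall>v T. int_vec v \<and> v \<noteq> 0 \<and> sym_mat T \<and> mdot S T \<ge> v \<bullet> (S *v v)
        \<longrightarrow> mdot Sobs T > 0)"

definition V_rP :: "mat2 set" where
  "V_rP = {mdiag s11 s22 | s11 s22. True}"

end

theory Submission
  imports Defs
begin

lemma mm2: "((A::mat2) ** B) $ i $ j = A$i$1 * B$1$j + A$i$2 * B$2$j"
  by (simp add: matrix_matrix_mult_def sum_2)
lemma tr2: "trace (A::mat2) = A$1$1 + A$2$2"
  by (simp add: trace_def sum_2)
lemma mat_eq2: "(A::mat2) = B \<longleftrightarrow> A$1$1 = B$1$1 \<and> A$1$2 = B$1$2 \<and> A$2$1 = B$2$1 \<and> A$2$2 = B$2$2"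
  by (auto simp: vec_eq_iff forall_2)
lemma mdiag_ent: "mdiag a b $1$1 = a" "mdiag a b $1$2 = 0" "mdiag a b $2$1 = 0" "mdiag a b $2$2 = b"
  by (simp_all add: mdiag_def)
lemma mat1_ent: "(mat 1::mat2) $1$1 = 1" "(mat 1::mat2) $1$2 = 0" "(mat 1::mat2) $2$1 = 0" "(mat 1::mat2) $2$2 = 1"
  by (simp_all add: mat_def)
lemma mdot_key: "mdot X (mat 1 - transpose (k::mat2) ** k) = trace X - trace (k ** X ** transpose k)"
  by (simp add: mdot_def tr2 mm2 transpose_def mat1_ent algebra_simps)

lemma int_sq: "(x::real) \<in> \<int> \<Longrightarrow> x \<noteq> 0 \<Longrightarrow> x^2 \<ge> 1"
proof -
  assume "x \<in> \<int>" "x \<noteq> 0"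
  then obtain n::int where "x = of_int n" "n \<noteq> 0" by (auto elim: Ints_cases)
  then have "\<bar>x\<bar> \<ge> 1" by linarith
  then show ?thesis by (metis abs_le_square_iff abs_one one_power2)
qed

lemma col_nz: "(x::real) \<in> \<int> \<Longrightarrow> y \<in> \<int> \<Longrightarrow> (x \<noteq> 0 \<or> y \<noteq> 0) \<Longrightarrow> x^2 + y^2 \<ge> 1"
  using int_sq[of x] int_sq[of y] by (smt (verit) zero_le_power2)

lemma two_nz: "(x::real) \<in> \<int> \<Longrightarrow> y \<in> \<int> \<Longrightarrow> x * y \<noteq> 0 \<Longrightarrow> x^2 + y^2 \<ge> 2"
  using int_sq[of x] int_sq[of y] by auto

lemma pos_comb:
  fixes p q x y :: real
  assumes "p > 0" "q > 0" "x \<ge> 0" "y \<ge> 0" "x + y \<ge> 1"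
  shows "p * x + q * y > 0"
proof (cases "x > 0")
  case True
  then have "p * x > 0" using assms by simp
  moreover have "q * y \<ge> 0" using assms by simp
  ultimately show ?thesis by linarith
next
  case False
  then have "y > 0" using assms by linarith
  then have "q * y > 0" using assms by simp
  moreover have "p * x \<ge> 0" using assms by simp
  ultimately show ?thesis by linarith
qed

theorem mainTheorem2:
  fixes S Sobs :: mat2
  assumes "pos_def S"
    and "minkowski_reduced_broad Sobs"
    and "primitive_rectangular S"
    and "assumption_A21 S Sobs"
  shows "minkowski_reduced_broad S \<and> S \<in> V_rP"
proof -
  from assms(3) obtain a0 b0 g where g: "g \<in> GL2Z"
    and conj: "aut (mdiag a0 b0) = (\<lambda>\<sigma>. g ** \<sigma> ** matrix_inv g) ` aut S"
    unfolding primitive_rectangular_def same_bravais_class_def conj_GL2Z_def by blast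
  define J where "J = mdiag 1 (-1)"
  have "J \<in> aut (mdiag a0 b0)"
    unfolding aut_def GL2Z_def int_mat_def J_def
    by (simp add: mat_eq2 mm2 transpose_def mdiag_ent det_2 forall_2)
  then obtain \<sigma> where \<sigma>: "\<sigma> \<in> aut S" and Jeq: "J = g ** \<sigma> ** matrix_inv g"
    using conj by auto
  define e where "e = det g"
  have gint: "g$i$j \<in> \<int>" for i j using g by (simp add: GL2Z_def int_mat_def)
  have e2: "e * e = 1" using g by (simp add: GL2Z_def e_def abs_if split: if_splits)
  have edef: "e = g$1$1*g$2$2 - g$1$2*g$2$1" by (simp add: e_def det_2)
  have eint: "e \<in> \<int>" using edef gint by simp
  define H :: mat2 where "H = vector [vector [e*g$2$2, -e*g$1$2], vector [-e*g$2$1, e*g$1$1]]"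
  have Hent: "H$1$1 = e*g$2$2" "H$1$2 = -e*g$1$2" "H$2$1 = -e*g$2$1" "H$2$2 = e*g$1$1"
    by (simp_all add: H_def)
  have "e*(g$1$1*g$2$2) - e*(g$1$2*g$2$1) = e*(g$1$1*g$2$2 - g$1$2*g$2$1)" by (simp add: algebra_simps)
  also have "\<dots> = 1" using e2 edef by simp
  finally have dd: "e*(g$1$1*g$2$2) - e*(g$1$2*g$2$1) = 1" .
  have Hg: "H ** g = mat 1"
    using dd by (auto simp: mat_eq2 mm2 Hent mat1_ent algebra_simps)
  have gH: "g ** H = mat 1"
    using dd by (auto simp: mat_eq2 mm2 Hent mat1_ent algebra_simps)
  have "\<exists>A'. g ** A' = mat 1 \<and> A' ** g = mat 1" using Hg gH by blast
  hence "g ** matrix_inv g = mat 1 \<and> matrix_inv g ** g = mat 1"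
    unfolding matrix_inv_def by (rule someI_ex)
  hence inv: "matrix_inv g ** g = mat 1" by simp
  have Jg: "J ** g = g ** \<sigma>"
    by (simp add: Jeq matrix_mul_assoc[symmetric] inv)
  have "H ** J ** g = H ** (g ** \<sigma>)"
    by (simp add: matrix_mul_assoc[symmetric] Jg)
  also have "\<dots> = \<sigma>" by (simp add: matrix_mul_assoc Hg)
  finally have \<sigma>eq: "\<sigma> = H ** J ** g" by simp
  define D where "D = transpose H ** S ** H"
  have \<sigma>S: "transpose \<sigma> ** S ** \<sigma> = S" using \<sigma> by (simp add: aut_def)
  have tHg: "transpose H ** transpose g = mat 1"
    by (metis gH matrix_transpose_mul transpose_mat)
  have tgH: "transpose g ** transpose H = mat 1"
    by (metis Hg matrix_transpose_mul transpose_mat)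
  have tHg': "transpose H ** (transpose g ** X) = X" for X :: mat2
    by (simp add: matrix_mul_assoc tHg)
  have tgH': "transpose g ** (transpose H ** X) = X" for X :: mat2
    by (simp add: matrix_mul_assoc tgH)
  have "D = transpose H ** (transpose \<sigma> ** S ** \<sigma>) ** H" using \<sigma>S D_def by simp
  also have "\<dots> = transpose J ** D ** J"
    unfolding \<sigma>eq D_def
    by (simp add: matrix_transpose_mul matrix_mul_assoc[symmetric] tHg' gH)
  finally have JDJ: "transpose J ** D ** J = D" by simp
  have D12: "D$1$2 = 0" "D$2$1 = 0"
    using JDJ by (simp_all add: mat_eq2 mm2 transpose_def J_def mdiag_ent)
  have Sg: "S = transpose g ** D ** g"
    unfolding D_def by (simp add: matrix_mul_assoc[symmetric] tgH' Hg)
  define p where "p = D$1$1"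
  define q where "q = D$2$2"
  define v1 :: "real^2" where "v1 = vector [H$1$1, H$2$1]"
  define v2 :: "real^2" where "v2 = vector [H$1$2, H$2$2]"
  have Hint: "H$i$j \<in> \<int>" for i j
    using gint eint by (auto simp: H_def forall_2 vector_def)
  have v1i: "int_vec v1" using Hint by (simp add: int_vec_def v1_def forall_2)
  have v2i: "int_vec v2" using Hint by (simp add: int_vec_def v2_def forall_2)
  have gH11: "g$1$1*H$1$1 + g$1$2*H$2$1 = 1" using gH by (simp add: mat_eq2 mm2 mat1_ent)
  have gH22: "g$2$1*H$1$2 + g$2$2*H$2$2 = 1" using gH by (simp add: mat_eq2 mm2 mat1_ent)
  have v1nz: "v1 \<noteq> 0"
  proof
    assume "v1 = 0"
    then have "H$1$1 = 0" "H$2$1 = 0" by (simp_all add: v1_def vec_eq_iff forall_2)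
    then show False using gH11 by simp
  qed
  have v2nz: "v2 \<noteq> 0"
  proof
    assume "v2 = 0"
    then have "H$1$2 = 0" "H$2$2 = 0" by (simp_all add: v2_def vec_eq_iff forall_2)
    then show False using gH22 by simp
  qed
  have pv: "v1 \<bullet> (S *v v1) = p"
    by (simp add: p_def D_def v1_def mm2 transpose_def inner_vec_def sum_2 matrix_vector_mult_def algebra_simps)
  have qv: "v2 \<bullet> (S *v v2) = q"
    by (simp add: q_def D_def v2_def mm2 transpose_def inner_vec_def sum_2 matrix_vector_mult_def algebra_simps)
  have ppos: "p > 0" using assms(1) v1nz pv by (auto simp: pos_def_def)
  have qpos: "q > 0" using assms(1) v2nz qv by (auto simp: pos_def_def)
  have key: "trace S - trace (k ** S ** transpose k) < v \<bullet> (S *v v)"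
    if k: "k \<in> GL2Z" and v: "int_vec v" "v \<noteq> 0" for k :: mat2 and v
  proof (rule ccontr)
    assume c: "\<not> ?thesis"
    define T where "T = mat 1 - transpose k ** k"
    have symT: "sym_mat T"
      by (simp add: T_def sym_mat_def mat_eq2 transpose_def mm2 mat1_ent)
    have "mdot S T \<ge> v \<bullet> (S *v v)" using c by (simp add: T_def mdot_key)
    then have "mdot Sobs T > 0" using assms(4) v symT unfolding assumption_A21_def by blast
    moreover have "mdot Sobs (mat 1) \<le> mdot (k ** Sobs ** transpose k) (mat 1)"
      using assms(2) k unfolding minkowski_reduced_broad_def by blast
    ultimately show False unfolding T_def mdot_key by (simp add: mdot_def)
  qed
  have tHG: "transpose H \<in> GL2Z"
  proof -
    have "det H = e * (e * (g$1$1*g$2$2 - g$1$2*g$2$1))"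
      by (simp add: det_2 Hent algebra_simps)
    also have "\<dots> = e" using e2 edef by simp
    finally have "det (transpose H) = e" by (simp add: det_transpose)
    moreover have "\<bar>e\<bar> = 1" using g by (simp add: GL2Z_def e_def)
    ultimately show ?thesis using Hint by (simp add: GL2Z_def int_mat_def transpose_def)
  qed
  have kD: "transpose H ** S ** transpose (transpose H) = D" by (simp add: D_def)
  have trD: "trace D = p + q" by (simp add: tr2 p_def q_def)
  have k1: "trace S - (p + q) < p" using key[OF tHG v1i v1nz] kD trD pv by simp
  have k2: "trace S - (p + q) < q" using key[OF tHG v2i v2nz] kD trD qv by simp
  define A where "A = (g$1$1)^2 + (g$1$2)^2"
  define B where "B = (g$2$1)^2 + (g$2$2)^2"
  have trS: "trace S = p * A + q * B"
    by (subst Sg) (simp add: tr2 mm2 transpose_def D12 p_def q_def A_def B_def power2_eq_square algebra_simps)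
  have e0: "e \<noteq> 0" using e2 by auto
  have A1: "A \<ge> 1" unfolding A_def
    using gint e0 edef by (intro col_nz) auto
  have B1: "B \<ge> 1" unfolding B_def
    using gint e0 edef by (intro col_nz) auto
  have A2: "A < 2"
  proof (rule ccontr)
    assume "\<not> A < 2"
    then have "p * (A - 1) \<ge> p * 1" using ppos by (intro mult_left_mono) auto
    moreover have "q * (B - 1) \<ge> 0" using qpos B1 by simp
    ultimately
    moreover have "p*(A-1) + q*(B-1) = p*A + q*B - p - q" by (simp add: algebra_simps)
    ultimately show False using k1 trS by linarith
  qed
  have B2: "B < 2"
  proof (rule ccontr)
    assume "\<not> B < 2"
    then have "q * (B - 1) \<ge> q * 1" using qpos by (intro mult_left_mono) auto
    moreover have "p * (A - 1) \<ge> 0" using ppos A1 by simp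
    ultimately
    moreover have "p*(A-1) + q*(B-1) = p*A + q*B - p - q" by (simp add: algebra_simps)
    ultimately show False using k2 trS by linarith
  qed
  have ab: "g$1$1 * g$1$2 = 0"
  proof (rule ccontr)
    assume "g$1$1 * g$1$2 \<noteq> 0"
    then have "A \<ge> 2" unfolding A_def using gint by (intro two_nz) auto
    then show False using A2 by simp
  qed
  have cd: "g$2$1 * g$2$2 = 0"
  proof (rule ccontr)
    assume "g$2$1 * g$2$2 \<noteq> 0"
    then have "B \<ge> 2" unfolding B_def using gint by (intro two_nz) auto
    then show False using B2 by simp
  qed
  have "S$1$2 = p * (g$1$1 * g$1$2) + q * (g$2$1 * g$2$2)"
    by (subst Sg) (simp add: mm2 transpose_def D12 p_def q_def algebra_simps)
  moreover have "S$2$1 = p * (g$1$1 * g$1$2) + q * (g$2$1 * g$2$2)"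
    by (subst Sg) (simp add: mm2 transpose_def D12 p_def q_def algebra_simps)
  ultimately have S12: "S$1$2 = 0" "S$2$1 = 0" using ab cd by simp_all
  have S11: "S$1$1 > 0"
  proof -
    have "S$1$1 = p * (g$1$1)^2 + q * (g$2$1)^2"
      by (subst Sg) (simp add: mm2 transpose_def D12 p_def q_def power2_eq_square algebra_simps)
    moreover have "(g$1$1)^2 + (g$2$1)^2 \<ge> 1"
      using gint e0 edef by (intro col_nz) auto
    ultimately show ?thesis using ppos qpos pos_comb by simp
  qed
  have S22: "S$2$2 > 0"
  proof -
    have "S$2$2 = p * (g$1$2)^2 + q * (g$2$2)^2"
      by (subst Sg) (simp add: mm2 transpose_def D12 p_def q_def power2_eq_square algebra_simps)
    moreover have "(g$1$2)^2 + (g$2$2)^2 \<ge> 1"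
      using gint e0 edef by (intro col_nz) auto
    ultimately show ?thesis using ppos qpos pos_comb by simp
  qed
  have red: "minkowski_reduced_broad S"
    unfolding minkowski_reduced_broad_def
  proof (intro conjI ballI)
    show "pos_def S" by fact
    fix k assume k: "k \<in> GL2Z"
    have kint: "k$i$j \<in> \<int>" for i j using k by (simp add: GL2Z_def int_mat_def)
    have kd: "det k \<noteq> 0" using k by (auto simp: GL2Z_def)
    have c1: "(k$1$1)^2 + (k$2$1)^2 \<ge> 1"
      using kint kd by (intro col_nz) (auto simp: det_2)
    have c2: "(k$1$2)^2 + (k$2$2)^2 \<ge> 1"
      using kint kd by (intro col_nz) (auto simp: det_2)
    have "trace (k ** S ** transpose k) = S$1$1 * ((k$1$1)^2 + (k$2$1)^2) + S$2$2 * ((k$1$2)^2 + (k$2$2)^2)"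
      by (simp add: tr2 mm2 transpose_def S12 power2_eq_square algebra_simps)
    moreover have "S$1$1 * ((k$1$1)^2 + (k$2$1)^2) \<ge> S$1$1 * 1"
      using S11 c1 by (intro mult_left_mono) auto
    moreover have "S$2$2 * ((k$1$2)^2 + (k$2$2)^2) \<ge> S$2$2 * 1"
      using S22 c2 by (intro mult_left_mono) auto
    ultimately show "mdot S (mat 1) \<le> mdot (k ** S ** transpose k) (mat 1)"
      by (simp add: mdot_def tr2)
  qed
  have "S = mdiag (S$1$1) (S$2$2)" by (simp add: mat_eq2 mdiag_ent S12)
  then have "S \<in> V_rP" unfolding V_rP_def by blast
  with red show ?thesis by simp
qed
end
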